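(* Let $K_1\subsetneq K_2$ be fields and $R=K_1+xK_2[x]$ (polynomials over $K_2$ with constant term in $K_1$). Then $R$ is atomic, for every $a\in K_2\setminus\{0\}$ the element $ax$ is irreducible in $R$ but not absolutely irreducible, $R$ has prime elements, and every absolutely irreducible element of $R$ is prime.
   Context: For an integral domain $R$, factorization notions refer to the monoid $(R\setminus\{0\},\cdot)$. $R$ is atomic if every non-zero non-unit is a product of irreducibles. Two factorizations into irreducibles $a_1\cdots a_n=b_1\cdots b_m$ of the same element are essentially the same if $n=m$ and, after re-indexing, $a_j$ and $b_j$ are associated for all $j$. An irreducible $r$ is absolutely irreducible if for every $n\in\mathbb N$, every factorization of $r^n$ into irreducibles is essentially the same as $r^n=r\cdots r$. *)

theory Defs
  imports "HOL-Computational_Algebra.Polynomial"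
begin

text \<open>Factorization notions relative to a multiplicatively closed subset S of an
integral domain (here: a subring of a polynomial ring), i.e. for the monoid S - {0}.\<close>

definition is_subfield :: "'a::field set \<Rightarrow> bool" where
  "is_subfield K \<longleftrightarrow> 0 \<in> K \<and> 1 \<in> K \<and> (\<forall>a\<in>K. \<forall>b\<in>K. a + b \<in> K \<and> a * b \<in> K)
     \<and> (\<forall>a\<in>K. - a \<in> K) \<and> (\<forall>a\<in>K. a \<noteq> 0 \<longrightarrow> inverse a \<in> K)"

text \<open>The ring K1 + x K2[x]: polynomials over K2 with constant term in K1.\<close>
definition KxRing :: "'a::field set \<Rightarrow> 'a poly set" where
  "KxRing K1 = {p. coeff p 0 \<in> K1}"

definition sdvd :: "'b::comm_ring_1 set \<Rightarrow> 'b \<Rightarrow> 'b \<Rightarrow> bool" where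
  "sdvd S a b \<longleftrightarrow> (\<exists>c\<in>S. b = a * c)"

definition sunit :: "'b::comm_ring_1 set \<Rightarrow> 'b \<Rightarrow> bool" where
  "sunit S u \<longleftrightarrow> u \<in> S \<and> (\<exists>v\<in>S. u * v = 1)"

definition sassoc :: "'b::comm_ring_1 set \<Rightarrow> 'b \<Rightarrow> 'b \<Rightarrow> bool" where
  "sassoc S a b \<longleftrightarrow> (\<exists>u. sunit S u \<and> b = u * a)"

definition sirred :: "'b::comm_ring_1 set \<Rightarrow> 'b \<Rightarrow> bool" where
  "sirred S r \<longleftrightarrow> r \<in> S \<and> r \<noteq> 0 \<and> \<not> sunit S r \<and>
     (\<forall>a\<in>S. \<forall>b\<in>S. r = a * b \<longrightarrow> sunit S a \<or> sunit S b)"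

definition sprime :: "'b::comm_ring_1 set \<Rightarrow> 'b \<Rightarrow> bool" where
  "sprime S p \<longleftrightarrow> p \<in> S \<and> p \<noteq> 0 \<and> \<not> sunit S p \<and>
     (\<forall>a\<in>S. \<forall>b\<in>S. sdvd S p (a * b) \<longrightarrow> sdvd S p a \<or> sdvd S p b)"

definition satomic :: "'b::comm_ring_1 set \<Rightarrow> bool" where
  "satomic S \<longleftrightarrow> (\<forall>r\<in>S. r \<noteq> 0 \<and> \<not> sunit S r \<longrightarrow>
     (\<exists>fs. (\<forall>f\<in>set fs. sirred S f) \<and> prod_list fs = r))"

definition ess_same :: "'b::comm_ring_1 set \<Rightarrow> 'b list \<Rightarrow> 'b list \<Rightarrow> bool" where
  "ess_same S xs ys \<longleftrightarrow> length xs = length ys \<and>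
     (\<exists>\<sigma>. bij_betw \<sigma> {..<length xs} {..<length ys} \<and>
          (\<forall>j<length xs. sassoc S (xs ! j) (ys ! \<sigma> j)))"

definition sabs_irred :: "'b::comm_ring_1 set \<Rightarrow> 'b \<Rightarrow> bool" where
  "sabs_irred S r \<longleftrightarrow> sirred S r \<and>
     (\<forall>n::nat. \<forall>fs. (\<forall>f\<in>set fs. sirred S f) \<and> prod_list fs = r ^ n \<longrightarrow>
        ess_same S fs (replicate n r))"

end

theory Submission
  imports Defs "HOL-Computational_Algebra.Computational_Algebra"
begin

lemma sf_inv: "is_subfield K \<Longrightarrow> a \<in> K \<Longrightarrow> inverse a \<in> K"
  unfolding is_subfield_def by (cases "a = 0") auto

lemma sf_mult: "is_subfield K \<Longrightarrow> a \<in> K \<Longrightarrow> b \<in> K \<Longrightarrow> a * b \<in> K"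
  unfolding is_subfield_def by auto

lemma sunit_deg: "sunit (KxRing K) (u::'a::field poly) \<Longrightarrow> degree u = 0 \<and> u \<noteq> 0"
proof -
  assume "sunit (KxRing K) u"
  then obtain v where "u * v = 1" unfolding sunit_def by auto
  hence iu: "is_unit u" by (metis dvd_triv_left)
  hence "u \<noteq> 0" by auto
  thus ?thesis using iu is_unit_iff_degree by blast
qed

lemma deg0_sunit:
  assumes K: "is_subfield K" and u: "u \<in> KxRing K" "u \<noteq> 0" "degree u = 0"
  shows "sunit (KxRing K) (u::'a::field poly)"
proof -
  have ue: "u = [:coeff u 0:]" using u(3) by (metis degree_0_id)
  hence c0: "coeff u 0 \<noteq> 0" using u(2) by auto
  have "coeff u 0 \<in> K" using u(1) unfolding KxRing_def by auto
  hence "[:inverse (coeff u 0):] \<in> KxRing K" using sf_inv[OF K] unfolding KxRing_def by auto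
  moreover have "u * [:inverse (coeff u 0):] = 1"
    by (subst ue) (simp add: c0 one_pCons)
  ultimately show ?thesis using u(1) unfolding sunit_def by blast
qed

lemma posdeg_nonunit: "degree u > 0 \<Longrightarrow> \<not> sunit (KxRing K) (u::'a::field poly)"
  using sunit_deg by fastforce

lemma deg1_irred:
  assumes K: "is_subfield K" and r: "r \<in> KxRing K" "degree r = 1"
  shows "sirred (KxRing K) (r::'a::field poly)"
  unfolding sirred_def
proof (intro conjI ballI impI)
  show "r \<in> KxRing K" by fact
  show "r \<noteq> 0" using r by auto
  show "\<not> sunit (KxRing K) r" by (rule posdeg_nonunit) (simp add: r)
  fix a b assume ab: "a \<in> KxRing K" "b \<in> KxRing K" "r = a * b"
  hence nz: "a \<noteq> 0" "b \<noteq> 0" using r by auto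
  hence "degree a + degree b = 1" using ab r degree_mult_eq by metis
  hence "degree a = 0 \<or> degree b = 0" by auto
  thus "sunit (KxRing K) a \<or> sunit (KxRing K) b" using deg0_sunit[OF K] ab nz by blast
qed

lemma atomic:
  assumes K: "is_subfield K"
  shows "satomic (KxRing (K::'a::field set))"
  unfolding satomic_def
proof (intro ballI impI)
  fix r assume "r \<in> KxRing K" "r \<noteq> 0 \<and> \<not> sunit (KxRing K) r"
  thus "\<exists>fs. (\<forall>f\<in>set fs. sirred (KxRing K) f) \<and> prod_list fs = r"
  proof (induction "degree r" arbitrary: r rule: less_induct)
    case less
    show ?case
    proof (cases "sirred (KxRing K) r")
      case True
      then show ?thesis by (intro exI[of _ "[r]"]) auto
    next
      case False
      then obtain a b where ab: "a \<in> KxRing K" "b \<in> KxRing K" "r = a * b"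
        "\<not> sunit (KxRing K) a" "\<not> sunit (KxRing K) b"
        using less.prems unfolding sirred_def by blast
      hence nz: "a \<noteq> 0" "b \<noteq> 0" using less.prems by auto
      have da: "degree a > 0" using deg0_sunit[OF K] ab nz by blast
      have db: "degree b > 0" using deg0_sunit[OF K] ab nz by blast
      have dr: "degree r = degree a + degree b" using ab nz degree_mult_eq by metis
      obtain fa where fa: "(\<forall>f\<in>set fa. sirred (KxRing K) f) \<and> prod_list fa = a"
        using less.hyps[of a] da db dr ab nz by auto
      obtain fb where fb: "(\<forall>f\<in>set fb. sirred (KxRing K) f) \<and> prod_list fb = b"
        using less.hyps[of b] da db dr ab nz by auto
      show ?thesis using fa fb ab by (intro exI[of _ "fa @ fb"]) auto
    qed
  qed
qed

lemma sunit_char: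
  assumes "sunit (KxRing K) (u::'a::field poly)"
  shows "\<exists>c\<in>K. c \<noteq> 0 \<and> u = [:c:]"
proof -
  have "degree u = 0" "u \<noteq> 0" using sunit_deg[OF assms] by auto
  hence "u = [:coeff u 0:]" by (metis degree_0_id)
  moreover have "coeff u 0 \<in> K" using assms unfolding sunit_def KxRing_def by auto
  ultimately show ?thesis using \<open>u \<noteq> 0\<close> by (metis pCons_0_0)
qed

lemma not_abs:
  assumes K: "is_subfield K" and t: "t \<notin> K" and a: "(a::'a::field) \<noteq> 0"
  shows "\<not> sabs_irred (KxRing K) [:0, a:]"
proof
  assume H: "sabs_irred (KxRing K) [:0, a:]"
  have t0: "t \<noteq> 0" using t K unfolding is_subfield_def by auto
  let ?fs = "[[:0, t*a:], [:0, inverse t * a:]]"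
  have "\<forall>f\<in>set ?fs. sirred (KxRing K) f"
    using deg1_irred[OF K] a t0 K unfolding KxRing_def is_subfield_def by auto
  moreover have "prod_list ?fs = [:0, a:] ^ 2"
    using t0 by (simp add: power2_eq_square)
  ultimately have "ess_same (KxRing K) ?fs (replicate 2 [:0, a:])"
    using H unfolding sabs_irred_def by blast
  then obtain \<sigma> where s: "bij_betw \<sigma> {..<length ?fs} {..<length (replicate 2 [:0, a:])}"
    "\<forall>j<length ?fs. sassoc (KxRing K) (?fs ! j) (replicate 2 [:0, a:] ! \<sigma> j)"
    unfolding ess_same_def by blast
  have "\<sigma> 0 \<in> {..<length (replicate 2 [:0, a:])}" using bij_betw_apply[OF s(1)] by simp
  hence "replicate 2 [:0, a:] ! \<sigma> 0 = [:0, a:]" by simp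
  hence "sassoc (KxRing K) [:0, t*a:] [:0, a:]" using s(2) by (metis length_Cons nth_Cons_0 zero_less_Suc)
  then obtain u where u: "sunit (KxRing K) u" "[:0, a:] = u * [:0, t*a:]"
    unfolding sassoc_def by auto
  obtain c where c: "c \<in> K" "c \<noteq> 0" "u = [:c:]" using sunit_char[OF u(1)] by auto
  have "a = c * (t * a)" using u(2) c(3) by (simp add: mult.commute)
  hence "c * t = 1" using a by (metis mult.assoc mult_1 mult_cancel_right)
  hence "t = inverse c" by (metis c(2) inverse_unique mult.commute)
  thus False using t sf_inv[OF K c(1)] by auto
qed

lemma prime_of_irred:
  assumes K: "is_subfield K" and r: "r \<in> KxRing K" "coeff r 0 \<noteq> 0"
    and irr: "irreducible (r::'a::field poly)" and nu: "\<not> sunit (KxRing K) r"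
  shows "sprime (KxRing K) r"
  unfolding sprime_def
proof (intro conjI ballI impI)
  show "r \<in> KxRing K" "r \<noteq> 0" "\<not> sunit (KxRing K) r" using r nu by auto
  have pr: "prime_elem r" using irr by (rule field_poly_irreducible_imp_prime)
  have key: "sdvd (KxRing K) r x" if x: "x \<in> KxRing K" "r dvd x" for x
  proof -
    obtain d where d: "x = r * d" using x(2) by auto
    have "coeff x 0 = coeff r 0 * coeff d 0" using d by (simp add: coeff_mult_0)
    hence "coeff d 0 = inverse (coeff r 0) * coeff x 0" using r(2) by (simp add: field_simps)
    moreover have xk: "coeff x 0 \<in> K" using x unfolding KxRing_def by simp
    moreover have "inverse (coeff r 0) \<in> K"
      using r(1) unfolding KxRing_def by (simp add: sf_inv[OF K])
    ultimately have "coeff d 0 \<in> K" using sf_mult[OF K] by simp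
    hence "d \<in> KxRing K" unfolding KxRing_def by simp
    thus ?thesis using d unfolding sdvd_def by auto
  qed
  fix a b assume ab: "a \<in> KxRing K" "b \<in> KxRing K" "sdvd (KxRing K) r (a * b)"
  hence "r dvd a * b" unfolding sdvd_def by auto
  hence "r dvd a \<or> r dvd b" by (rule prime_elem_dvd_multD[OF pr])
  thus "sdvd (KxRing K) r a \<or> sdvd (KxRing K) r b" using key[OF ab(1)] key[OF ab(2)] by blast
qed

lemma irred_c0:
  assumes K: "is_subfield K" and r: "sirred (KxRing K) (r::'a::field poly)" "coeff r 0 \<noteq> 0"
  shows "irreducible r"
proof (rule irreducibleI)
  have rr: "r \<in> KxRing K" "r \<noteq> 0" "\<not> sunit (KxRing K) r"
    "\<And>a b. a \<in> KxRing K \<Longrightarrow> b \<in> KxRing K \<Longrightarrow> r = a * b \<Longrightarrow> sunit (KxRing K) a \<or> sunit (KxRing K) b"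
    using r(1) unfolding sirred_def by blast+
  show "r \<noteq> 0" by fact
  show "\<not> is_unit r"
  proof
    assume "is_unit r"
    hence "degree r = 0" using is_unit_iff_degree rr(2) by blast
    hence "sunit (KxRing K) r" using deg0_sunit[OF K rr(1) rr(2)] by blast
    thus False using rr(3) by blast
  qed
  fix g h assume gh: "r = g * h"
  show "is_unit g \<or> is_unit h"
  proof (rule ccontr)
    assume nn: "\<not> (is_unit g \<or> is_unit h)"
    have nz: "g \<noteq> 0" "h \<noteq> 0" using gh rr(2) by auto
    have dg1: "degree g \<noteq> 0" using nn is_unit_iff_degree[OF nz(1)] by blast
    have dh1: "degree h \<noteq> 0" using nn is_unit_iff_degree[OF nz(2)] by blast
    have "coeff r 0 = coeff g 0 * coeff h 0" using gh by (simp add: coeff_mult_0)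
    hence g0: "coeff g 0 \<noteq> 0" using r(2) by auto
    define g' where "g' = smult (inverse (coeff g 0)) g"
    define h' where "h' = smult (coeff g 0) h"
    have e: "r = g' * h'" unfolding g'_def h'_def using gh g0 by simp
    have g'in: "g' \<in> KxRing K" unfolding g'_def KxRing_def using g0 K
      by (simp add: is_subfield_def)
    have "coeff h' 0 = coeff r 0" unfolding h'_def using gh by (simp add: coeff_mult_0)
    hence h'in: "h' \<in> KxRing K" using rr(1) unfolding KxRing_def by simp
    have "degree g' = degree g" unfolding g'_def using g0 by simp
    hence "\<not> sunit (KxRing K) g'" using dg1 posdeg_nonunit[of g' K] by simp
    moreover have "degree h' = degree h" unfolding h'_def using g0 by simp
    hence "\<not> sunit (KxRing K) h'" using dh1 posdeg_nonunit[of h' K] by simp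
    ultimately show False using rr(4)[OF g'in h'in e] by blast
  qed
qed

lemma irred_c0_zero:
  assumes K: "is_subfield K" and r: "sirred (KxRing K) (r::'a::field poly)" "coeff r 0 = 0"
  shows "\<exists>a. a \<noteq> 0 \<and> r = [:0, a:]"
proof -
  have rr: "r \<in> KxRing K" "r \<noteq> 0" "\<not> sunit (KxRing K) r"
    "\<And>a b. a \<in> KxRing K \<Longrightarrow> b \<in> KxRing K \<Longrightarrow> r = a * b \<Longrightarrow> sunit (KxRing K) a \<or> sunit (KxRing K) b"
    using r(1) unfolding sirred_def by blast+
  have dpos: "degree r \<noteq> 0" using deg0_sunit[OF K rr(1) rr(2)] rr(3) by blast
  have "poly r 0 = 0" using r(2) by (simp add: poly_0_coeff_0)
  hence "[:-0, 1:] dvd r" using poly_eq_0_iff_dvd by blast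
  then obtain q where q: "r = [:0, 1:] * q" by auto
  have "degree r \<le> 1"
  proof (rule ccontr)
    assume big: "\<not> degree r \<le> 1"
    have qz: "q \<noteq> 0" using q rr(2) by auto
    have "degree r = degree ([:0, 1:] :: 'a poly) + degree q" using q qz degree_mult_eq[of "[:0,1:]" q] by simp
    hence "degree r = 1 + degree q" by simp
    hence dq: "degree q \<noteq> 0" using big by linarith
    define s where "s = (if coeff q 0 = 0 then 1 else coeff q 0)"
    have s0: "s \<noteq> 0" unfolding s_def by auto
    define f where "f = [:0, s:]"
    define g where "g = smult (inverse s) q"
    have e: "r = f * g" unfolding f_def g_def q using s0 by simp
    have fin: "f \<in> KxRing K" unfolding f_def KxRing_def using K by (simp add: is_subfield_def)
    have "coeff g 0 = 0 \<or> coeff g 0 = 1" unfolding g_def s_def by auto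
    hence gin: "g \<in> KxRing K" unfolding KxRing_def using K by (auto simp: is_subfield_def)
    have "degree f = 1" unfolding f_def using s0 by simp
    hence "\<not> sunit (KxRing K) f" using posdeg_nonunit[of f K] by simp
    moreover have "degree g = degree q" unfolding g_def using s0 by simp
    hence "\<not> sunit (KxRing K) g" using dq posdeg_nonunit[of g K] by simp
    ultimately show False using rr(4)[OF fin gin e] by blast
  qed
  hence d1: "degree r = 1" using dpos by linarith
  have "r = [:0, coeff r 1:]"
  proof (rule poly_eqI)
    fix n show "coeff r n = coeff [:0, coeff r 1:] n"
    proof (cases n)
      case 0 thus ?thesis using r(2) by simp
    next
      case (Suc m) thus ?thesis using d1 coeff_eq_0[of r n] by (cases m) auto
    qed
  qed
  moreover have "coeff r 1 \<noteq> 0" using d1 rr(2) by (metis leading_coeff_0_iff)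
  ultimately show ?thesis by blast
qed

theorem mainTheorem6:
  fixes K1 :: "'a::field set"
  assumes "is_subfield K1" and "K1 \<noteq> UNIV"
  shows "satomic (KxRing K1)
    \<and> (\<forall>a::'a. a \<noteq> 0 \<longrightarrow> sirred (KxRing K1) [:0, a:] \<and> \<not> sabs_irred (KxRing K1) [:0, a:])
    \<and> (\<exists>p. sprime (KxRing K1) p)
    \<and> (\<forall>r. sabs_irred (KxRing K1) r \<longrightarrow> sprime (KxRing K1) r)"
proof (intro conjI allI impI)
  note K = assms(1)
  obtain t where t: "t \<notin> K1" using assms(2) by auto
  show "satomic (KxRing K1)" using atomic[OF K] .
  fix a :: 'a assume "a \<noteq> 0"
  moreover have "[:0, a:] \<in> KxRing K1" using K unfolding KxRing_def is_subfield_def by simp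
  ultimately show "sirred (KxRing K1) [:0, a:]" using deg1_irred[OF K, of "[:0, a:]"] by simp
  show "\<not> sabs_irred (KxRing K1) [:0, a:]" using not_abs[OF K t \<open>a \<noteq> 0\<close>] .
next
  note K = assms(1)
  let ?p = "[:1, 1::'a:]"
  have pin: "?p \<in> KxRing K1" using K unfolding KxRing_def is_subfield_def by simp
  have irr: "sirred (KxRing K1) ?p" using deg1_irred[OF K pin] by simp
  have c: "coeff ?p 0 \<noteq> 0" by simp
  have nu: "\<not> sunit (KxRing K1) ?p" using irr unfolding sirred_def by blast
  have "sprime (KxRing K1) ?p"
    by (rule prime_of_irred[OF K pin c irred_c0[OF K irr c] nu])
  thus "\<exists>p. sprime (KxRing K1) p" by blast
next
  note K = assms(1)
  obtain t where t: "t \<notin> K1" using assms(2) by auto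
  fix r assume H: "sabs_irred (KxRing K1) r"
  hence irr: "sirred (KxRing K1) r" unfolding sabs_irred_def by (elim conjE)
  have c: "coeff r 0 \<noteq> 0"
  proof
    assume "coeff r 0 = 0"
    then obtain a where "a \<noteq> 0" "r = [:0, a:]" using irred_c0_zero[OF K irr] by auto
    thus False using not_abs[OF K t] H by blast
  qed
  have rin: "r \<in> KxRing K1" "\<not> sunit (KxRing K1) r" using irr unfolding sirred_def by blast+
  show "sprime (KxRing K1) r" by (rule prime_of_irred[OF K rin(1) c irred_c0[OF K irr c] rin(2)])
qed

end
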